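(* Let $M_n$ be the Motzkin numbers, defined by $M_0=M_1=1$ and $(n+2)M_n=(2n+1)M_{n-1}+(3n-3)M_{n-2}$ for $n\ge 2$. Then $\{M_n\}_{n\ge0}$ is asymptotically $r$-log-convex for every positive integer $r$.
   Context: $\mathscr{L}a_n=a_na_{n+2}-a_{n+1}^2$, $\mathscr{L}^k a_n=\mathscr{L}(\mathscr{L}^{k-1}a_n)$. A sequence is asymptotically $r$-log-convex if there is $N$ such that $\mathscr{L}^k a_n\ge0$ for all $k=1,\dots,r$ and all $n\ge N$. *)

theory Defs
  imports Complex_Main
begin

fun motzkin :: "nat \<Rightarrow> real" where
  "motzkin 0 = 1"
| "motzkin (Suc 0) = 1"
| "motzkin (Suc (Suc k)) =
     ((2 * real (k+2) + 1) * motzkin (Suc k) + (3 * real (k+2) - 3) * motzkin k) / (real (k+2) + 2)"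

definition logop :: "(nat \<Rightarrow> real) \<Rightarrow> nat \<Rightarrow> real" where
  "logop a n = a n * a (n+2) - (a (n+1))^2"

definition logop_iter :: "nat \<Rightarrow> (nat \<Rightarrow> real) \<Rightarrow> nat \<Rightarrow> real" where
  "logop_iter k a = (logop ^^ k) a"

definition asymp_r_log_convex :: "nat \<Rightarrow> (nat \<Rightarrow> real) \<Rightarrow> bool" where
  "asymp_r_log_convex r a \<longleftrightarrow>
     (\<exists>N. \<forall>k\<in>{1..r}. \<forall>n\<ge>N. logop_iter k a n \<ge> 0)"

end

theory Submission imports Defs "HOL-Analysis.Analysis" begin

definition mom :: "real measure \<Rightarrow> nat \<Rightarrow> real" where
  "mom M n = (\<integral>t. t^n \<partial>M)"

definition Lm :: "real measure \<Rightarrow> real measure" where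
  "Lm M = distr (density (M \<Otimes>\<^sub>M M) (\<lambda>p. ennreal ((fst p - snd p)^2/2))) borel (\<lambda>p. fst p * snd p)"

locale goodm = finite_measure M for M :: "real measure" + fixes N P :: real
  assumes sets_M[measurable_cong]: "sets M = sets borel" and N0: "0 \<le> N" and NP: "N < P"
    and AEb: "AE t in M. -N \<le> t \<and> t \<le> P"
    and pos: "\<And>c. c < P \<Longrightarrow> emeasure M {c<..<P} > 0"
begin

sublocale PM: pair_sigma_finite M M
  by unfold_locales

lemma P0: "0 < P" using N0 NP by linarith

lemma bnd: "-N \<le> t \<Longrightarrow> t \<le> P \<Longrightarrow> \<bar>t\<bar> \<le> P"
  using NP by linarith

lemma integ: "integrable M (\<lambda>t. t^n)"
proof (rule integrable_const_bound[where B="P^n"])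
  show "AE x in M. norm (x ^ n) \<le> P ^ n"
    using AEb by eventually_elim (auto simp: power_abs intro!: power_mono bnd)
qed simp

lemma AEprod: "AE p in M \<Otimes>\<^sub>M M. -N \<le> fst p \<and> fst p \<le> P \<and> -N \<le> snd p \<and> snd p \<le> P"
proof (rule PM.AE_pair_measure)
  show "{x \<in> space (M \<Otimes>\<^sub>M M). - N \<le> fst x \<and> fst x \<le> P \<and> - N \<le> snd x \<and> snd x \<le> P} \<in> sets (M \<Otimes>\<^sub>M M)"
    by measurable
  show "AE x in M. AE y in M. - N \<le> fst (x, y) \<and> fst (x, y) \<le> P \<and> - N \<le> snd (x, y) \<and> snd (x, y) \<le> P"
    using AEb by eventually_elim (use AEb in \<open>auto elim: eventually_mono\<close>)
qed

lemma finprod: "finite_measure (M \<Otimes>\<^sub>M M)"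
  by (rule finite_measure_pair_measure) unfold_locales

lemma integ_prod: "integrable (M \<Otimes>\<^sub>M M) (\<lambda>p. fst p ^ i * snd p ^ j)"
proof -
  interpret F: finite_measure "M \<Otimes>\<^sub>M M" by (rule finprod)
  show ?thesis
  proof (rule F.integrable_const_bound[where B="P^i * P^j"])
    show "AE x in M \<Otimes>\<^sub>M M. norm (fst x ^ i * snd x ^ j) \<le> P ^ i * P ^ j"
      using AEprod by eventually_elim
        (auto simp: power_abs abs_mult intro!: mult_mono power_mono bnd zero_le_power less_imp_le[OF P0])
  qed simp
qed

lemma int_prod: "(\<integral>p. fst p ^ i * snd p ^ j \<partial>(M \<Otimes>\<^sub>M M)) = mom M i * mom M j"
proof -
  have "(\<integral>p. fst p ^ i * snd p ^ j \<partial>(M \<Otimes>\<^sub>M M)) = (\<integral>x. (\<integral>y. x^i * y^j \<partial>M) \<partial>M)"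
    using PM.integral_fst'[OF integ_prod[of i j]] by simp
  also have "\<dots> = (\<integral>x. x^i * mom M j \<partial>M)"
    by (simp add: mom_def integ)
  also have "\<dots> = mom M i * mom M j"
    by (simp add: mom_def integ)
  finally show ?thesis .
qed


definition "w p = (fst p - snd p)^2 / 2"

lemma w_meas[measurable]: "w \<in> borel_measurable (M \<Otimes>\<^sub>M M)"
  unfolding w_def by measurable

lemma Lm_eq: "Lm M = distr (density (M \<Otimes>\<^sub>M M) w) borel (\<lambda>p. fst p * snd p)"
  unfolding Lm_def w_def ..

lemma mom_Lm: "mom (Lm M) n = logop (mom M) n"
proof -
  have "mom (Lm M) n = (\<integral>p. (fst p * snd p)^n \<partial>(density (M \<Otimes>\<^sub>M M) w))"
    unfolding mom_def Lm_eq by (subst integral_distr) auto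
  also have "\<dots> = (\<integral>p. w p * (fst p * snd p)^n \<partial>(M \<Otimes>\<^sub>M M))"
    by (subst integral_density) (auto simp: w_def)
  also have "\<dots> = (\<integral>p. (1/2) * (fst p ^ (n+2) * snd p ^ n) + (1/2) * (fst p ^ n * snd p ^ (n+2))
         - fst p ^ (n+1) * snd p ^ (n+1) \<partial>(M \<Otimes>\<^sub>M M))"
    by (rule Bochner_Integration.integral_cong) (auto simp: w_def power2_eq_square power_mult_distrib field_simps)
  also have "\<dots> = (1/2) * (mom M (n+2) * mom M n) + (1/2) * (mom M n * mom M (n+2)) - mom M (n+1) * mom M (n+1)"
    apply (subst Bochner_Integration.integral_diff)
      apply (intro Bochner_Integration.integrable_add integrable_mult_right integ_prod)+
    apply (subst Bochner_Integration.integral_add)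
      apply (intro integrable_mult_right integ_prod)+
    apply (simp only: integral_mult_right_zero int_prod)
    done
  also have "\<dots> = logop (mom M) n"
    by (simp add: logop_def power2_eq_square algebra_simps)
  finally show ?thesis .
qed


lemma spaceM: "space M = UNIV"
  using sets_eq_imp_space_eq[OF sets_M] by simp

lemma fin_D: "finite_measure (density (M \<Otimes>\<^sub>M M) w)"
proof (rule finite_measureI)
  interpret F: finite_measure "M \<Otimes>\<^sub>M M" by (rule finprod)
  have "emeasure (density (M \<Otimes>\<^sub>M M) w) (space (density (M \<Otimes>\<^sub>M M) w))
      = (\<integral>\<^sup>+p. ennreal (w p) * indicator (space (M \<Otimes>\<^sub>M M)) p \<partial>(M \<Otimes>\<^sub>M M))"
    by (subst emeasure_density) auto
  also have "\<dots> \<le> (\<integral>\<^sup>+p. ennreal ((N+P)^2/2) \<partial>(M \<Otimes>\<^sub>M M))"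
  proof (rule nn_integral_mono_AE)
    show "AE x in M \<Otimes>\<^sub>M M. ennreal (w x) * indicator (space (M \<Otimes>\<^sub>M M)) x \<le> ennreal ((N + P)\<^sup>2 / 2)"
      using AEprod
    proof eventually_elim
      case (elim x)
      have "\<bar>fst x - snd x\<bar> \<le> N + P" using elim by linarith
      then have "(fst x - snd x)^2 \<le> (N+P)^2"
        by (metis abs_le_square_iff abs_of_nonneg add_nonneg_nonneg N0 P0 less_imp_le)
      then show ?case by (auto simp: w_def indicator_def)
    qed
  qed
  also have "\<dots> < \<infinity>" using F.emeasure_finite[of "space (M \<Otimes>\<^sub>M M)"] by (simp add: ennreal_mult_eq_top_iff less_top[symmetric])
  finally show "emeasure (density (M \<Otimes>\<^sub>M M) w) (space (density (M \<Otimes>\<^sub>M M) w)) \<noteq> \<infinity>" by simp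
qed

lemma fin_Lm: "finite_measure (Lm M)"
  unfolding Lm_eq
  by (rule finite_measure.finite_measure_distr[OF fin_D]) simp

lemma prod_bounds:
  fixes a b :: real
  assumes "-N \<le> a" "a \<le> P" "-N \<le> b" "b \<le> P"
  shows "-(N*P) \<le> a*b \<and> a*b \<le> P*P"
proof
  have "\<bar>a\<bar> \<le> P" "\<bar>b\<bar> \<le> P" using assms bnd by auto
  then have "\<bar>a*b\<bar> \<le> P*P" by (simp add: abs_mult mult_mono)
  then show "a*b \<le> P*P" by simp
  show "-(N*P) \<le> a*b"
  proof (cases "0 \<le> a")
    case True
    show ?thesis
    proof (cases "0 \<le> b")
      case True with \<open>0 \<le> a\<close> N0 P0 show ?thesis
        by (metis mult_nonneg_nonneg neg_le_0_iff_le order_trans less_imp_le)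
    next
      case False
      have "a*b \<ge> P*b" using \<open>0 \<le> a\<close> False assms(2) by (simp add: mult_right_mono_neg)
      moreover have "P*b \<ge> P*(-N)" using mult_left_mono[OF assms(3), of P] P0 by simp
      ultimately show ?thesis by (simp add: mult.commute)
    qed
  next
    case False
    have "a*b \<ge> a*P" using False assms(4) by (simp add: mult_left_mono_neg)
    moreover have "a*P \<ge> (-N)*P" using mult_right_mono[OF assms(1), of P] P0 by simp
    ultimately show ?thesis by simp
  qed
qed

lemma AE_Lm: "AE t in Lm M. -(N*P) \<le> t \<and> t \<le> P*P"
  unfolding Lm_eq
proof (subst AE_distr_iff)
  show "AE x in density (M \<Otimes>\<^sub>M M) w. - (N * P) \<le> fst x * snd x \<and> fst x * snd x \<le> P * P"
    by (subst AE_density) (auto intro: AE_mp[OF AEprod] simp: prod_bounds)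
qed auto


lemma find_d:
  assumes "c < P"
  shows "\<exists>d. c < d \<and> d < P \<and> emeasure M {c<..d} > 0"
proof (rule ccontr)
  assume H: "\<not> ?thesis"
  define dk where "dk k = P - (P - c) / (real k + 2)" for k :: nat
  have dk: "c < dk k \<and> dk k < P" for k
  proof -
    have a: "0 < (P - c) / (real k + 2)" using assms by simp
    have "(P - c) / (real k + 2) < (P - c) / 1"
      using assms by (intro divide_strict_left_mono) auto
    with a show ?thesis by (simp add: dk_def)
  qed
  have null: "{c<..dk k} \<in> null_sets M" for k
    using H dk[of k] sets_M by (auto simp: null_sets_def not_less) (meson not_less)
  have "{c<..<P} \<subseteq> (\<Union>k. {c<..dk k})"
  proof
    fix x assume x: "x \<in> {c<..<P}"
    obtain k :: nat where k: "(P - c) / (P - x) < real k" using reals_Archimedean2 by blast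
    have "(P - c) / (P - x) \<le> real k + 2" using k by linarith
    then have "(P - c) \<le> (real k + 2) * (P - x)" using x by (simp add: divide_le_eq)
    then have "(P - c) / (real k + 2) \<le> P - x" by (simp add: divide_le_eq mult.commute)
    then have "x \<le> dk k" by (simp add: dk_def)
    then show "x \<in> (\<Union>k. {c<..dk k})" using x by auto
  qed
  moreover have "(\<Union>k. {c<..dk k}) \<in> null_sets M" using null by auto
  ultimately have "{c<..<P} \<in> null_sets M"
    using null_sets_subset[of "\<Union>k. {c<..dk k}" M "{c<..<P}"] sets_M by auto
  then show False using pos[OF assms] by (simp add: null_sets_def)
qed

lemma pos_Lm:
  assumes c': "c' < P*P"
  shows "emeasure (Lm M) {c'<..<P*P} > 0"
proof -
  define s where "s = max 0 (sqrt c')"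
  have sP: "s < P"
  proof (cases "c' \<le> 0")
    case True then show ?thesis using P0 by (simp add: s_def)
  next
    case False
    have "sqrt c' < \<bar>P\<bar>" using real_sqrt_less_mono[OF c'] by simp
    then show ?thesis using P0 by (simp add: s_def)
  qed
  define c where "c = (s + P) / 2"
  have c: "0 \<le> c" "s < c" "c < P" using sP by (auto simp: c_def s_def)
  have cc: "c' < c * c"
  proof (cases "c' \<le> 0")
    case True
    have "0 < c" using c s_def by linarith
    then have "0 < c * c" by simp
    then show ?thesis using True by linarith
  next
    case False
    have "sqrt c' < c" using c by (simp add: s_def)
    moreover have "0 < sqrt c'" using False by simp
    ultimately have "sqrt c' * sqrt c' < c * c"
      using mult_strict_mono[of "sqrt c'" c "sqrt c'" c] by linarith
    then show ?thesis using False by simp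
  qed
  obtain d where d: "c < d" "d < P" "emeasure M {c<..d} > 0" using find_d[OF c(3)] by blast
  have d2: "emeasure M {d<..<P} > 0" using pos[OF d(2)] .
  define R where "R = {c<..d} \<times> {d<..<P}"
  have R_sets: "R \<in> sets (M \<Otimes>\<^sub>M M)" unfolding R_def using sets_M by auto
  have "emeasure (M \<Otimes>\<^sub>M M) R = emeasure M {c<..d} * emeasure M {d<..<P}"
    unfolding R_def by (rule emeasure_pair_measure_Times) (use sets_M in auto)
  then have Rpos: "emeasure (M \<Otimes>\<^sub>M M) R \<noteq> 0" using d(3) d2 by (simp add: ennreal_zero_less_mult_iff) (metis not_less_zero less_irrefl)
  define A where "A = (\<lambda>p. fst p * snd p) -` {c'<..<P*P} \<inter> space (M \<Otimes>\<^sub>M M)"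
  have inR: "p \<in> A \<and> w p > 0" if "p \<in> R" for p
  proof -
    obtain x y where p: "p = (x,y)" "c < x" "x \<le> d" "d < y" "y < P" using \<open>p \<in> R\<close> by (auto simp: R_def)
    have "c * c \<le> x * y" using p c by (intro mult_mono) auto
    moreover have "x * y < P * P" using p c by (intro mult_strict_mono) auto
    moreover have "w p > 0" using p by (auto simp: w_def)
    ultimately show ?thesis using cc p by (auto simp: A_def space_pair_measure spaceM)
  qed
  have "emeasure (Lm M) {c'<..<P*P} = emeasure (density (M \<Otimes>\<^sub>M M) w) A"
    unfolding Lm_eq A_def by (subst emeasure_distr) auto
  also have "\<dots> = (\<integral>\<^sup>+p. ennreal (w p) * indicator A p \<partial>(M \<Otimes>\<^sub>M M))"
    unfolding A_def by (subst emeasure_density) auto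
  finally have eq: "emeasure (Lm M) {c'<..<P*P} = (\<integral>\<^sup>+p. ennreal (w p) * indicator A p \<partial>(M \<Otimes>\<^sub>M M))" .
  have "(\<integral>\<^sup>+p. ennreal (w p) * indicator A p \<partial>(M \<Otimes>\<^sub>M M)) \<noteq> 0"
  proof
    assume "(\<integral>\<^sup>+p. ennreal (w p) * indicator A p \<partial>(M \<Otimes>\<^sub>M M)) = 0"
    then have "AE p in M \<Otimes>\<^sub>M M. ennreal (w p) * indicator A p = 0"
      by (subst (asm) nn_integral_0_iff_AE) (auto simp: A_def)
    then have "AE p in M \<Otimes>\<^sub>M M. p \<notin> R"
      by eventually_elim (use inR in \<open>force simp: indicator_def ennreal_eq_0_iff\<close>)
    then have "R \<in> null_sets (M \<Otimes>\<^sub>M M)" using AE_iff_null_sets[OF R_sets] by simp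
    then show False using Rpos by (simp add: null_sets_def)
  qed
  then show ?thesis using eq by (simp add: zero_less_iff_neq_zero)
qed

lemma goodm_Lm: "goodm (Lm M) (N*P) (P*P)"
proof -
  interpret F: finite_measure "Lm M" by (rule fin_Lm)
  show ?thesis
  proof unfold_locales
    show "sets (Lm M) = sets borel" by (simp add: Lm_def)
    show "0 \<le> N*P" using N0 P0 by simp
    show "N*P < P*P" using NP P0 by simp
    show "AE t in Lm M. -(N*P) \<le> t \<and> t \<le> P*P" by (rule AE_Lm)
  qed (rule pos_Lm)
qed


lemma ev_pos: "eventually (\<lambda>n. mom M n > 0) sequentially"
proof -
  define c1 where "c1 = N + (P - N) / 3"
  define c2 where "c2 = N + 2 * (P - N) / 3"
  have c: "N < c1" "c1 < c2" "c2 < P" "0 < c1" using NP N0 by (auto simp: c1_def c2_def field_simps)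
  define a where "a = measure M {c2<..<P}"
  define T where "T = measure M (space M)"
  have a: "0 < a" using pos[OF c(3)] by (simp add: a_def emeasure_eq_measure)
  have pw: "AE t in M. c2^n * indicator {c2<..<P} t - c1^n \<le> t^n" for n
    using AEb
  proof eventually_elim
    case (elim t)
    show ?case
    proof (cases "c2 < t \<and> t < P")
      case True
      have "c2^n \<le> t^n" using True c by (intro power_mono) auto
      moreover have "0 \<le> c1^n" using c by simp
      ultimately show ?thesis using True by simp
    next
      case False
      have "- (c1^n) \<le> t^n"
      proof (cases "0 \<le> t")
        case True then have "0 \<le> t^n" by simp
        moreover have "0 \<le> c1^n" using c by simp
        ultimately show ?thesis by linarith
      next
        case f2: False
        have "\<bar>t\<bar> \<le> c1" using f2 elim c by linarith
        then have "\<bar>t\<bar>^n \<le> c1^n" by (intro power_mono) auto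
        then have "\<bar>t^n\<bar> \<le> c1^n" by (simp add: power_abs)
        then show ?thesis by linarith
      qed
      then show ?thesis using False by simp
    qed
  qed
  have lower: "c2^n * a - c1^n * T \<le> mom M n" for n
  proof -
    have "(\<integral>t. c2^n * indicator {c2<..<P} t - c1^n \<partial>M) \<le> mom M n"
      unfolding mom_def
    proof (rule integral_mono_AE[OF _ integ pw])
      show "integrable M (\<lambda>t. c2^n * indicator {c2<..<P} t - c1^n)"
      proof (rule integrable_const_bound[where B="c2^n + c1^n"])
        show "AE x in M. norm (c2 ^ n * indicat_real {c2<..<P} x - c1 ^ n) \<le> c2 ^ n + c1 ^ n"
        proof (rule AE_I2)
          fix x
          have "0 \<le> c2^n" "0 \<le> c1^n" using c by auto
          then show "norm (c2 ^ n * indicat_real {c2<..<P} x - c1 ^ n) \<le> c2 ^ n + c1 ^ n"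
            by (auto simp: indicator_def)
        qed
      qed (simp add: sets_M)
    qed
    moreover have "(\<integral>t. c2^n * indicator {c2<..<P} t - c1^n \<partial>M) = c2^n * a - c1^n * T"
      using integrable_real_indicator[of "{c2<..<P}" M]
      by (subst Bochner_Integration.integral_diff) (auto simp: a_def T_def spaceM sets_M less_top[symmetric])
    ultimately show ?thesis by simp
  qed
  have "(\<lambda>n. (c1/c2)^n * T) \<longlonglongrightarrow> 0 * T"
    using c by (intro tendsto_mult LIMSEQ_power_zero) auto
  then have "eventually (\<lambda>n. (c1/c2)^n * T < a) sequentially"
    using a by (intro order_tendstoD) auto
  then show ?thesis
  proof eventually_elim
    case (elim n)
    have c2p: "0 < c2^n" using c by simp
    have "c1^n * T = (c1/c2)^n * T * c2^n" using c by (simp add: power_divide)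
    also have "\<dots> < a * c2^n" using elim c2p by (intro mult_strict_right_mono) auto
    finally have "c1^n * T < c2^n * a" by (simp add: mult.commute)
    with lower[of n] show ?case by linarith
  qed
qed

end


definition uu :: "real \<Rightarrow> real" where "uu t = 1 + 2 * cos t"

definition J :: "nat \<Rightarrow> real" where
  "J n = (LBINT t=ereal 0..ereal pi. uu t ^ n * sin t ^ 2)"

lemma FTC0:
  fixes G g :: "real \<Rightarrow> real"
  assumes d: "\<And>x. (G has_real_derivative g x) (at x)" and c: "\<And>x. isCont g x"
  shows "(LBINT t=ereal 0..ereal pi. g t) = G pi - G 0"
proof -
  have 1: "continuous_on {min 0 pi..max 0 pi} g"
    by (rule continuous_at_imp_continuous_on) (rule ballI, rule c)
  have 2: "(G has_vector_derivative g x) (at x within {min 0 pi..max 0 pi})" for x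
    by (rule has_vector_derivative_at_within) (rule d[unfolded has_real_derivative_iff_has_vector_derivative])
  show ?thesis by (rule interval_integral_FTC_finite[OF 1 2])
qed

lemma intg: "(\<And>x. isCont f x) \<Longrightarrow> interval_lebesgue_integrable lborel (ereal 0) (ereal pi) f"
  by (rule interval_integrable_isCont)

lemma isCont_J: "isCont (\<lambda>t. uu t ^ n * sin t ^ 2) x"
  unfolding uu_def by (intro continuous_intros)

lemma sc: "sin (x::real) * sin x = 1 - cos x * cos x"
  using sin_cos_squared_add3[of x] by linarith

lemma J0: "J 0 = pi/2"
proof -
  have "J 0 = (LBINT t=ereal 0..ereal pi. sin t ^ 2)" by (simp add: J_def)
  also have "\<dots> = (pi - sin pi * cos pi)/2 - (0 - sin 0 * cos 0)/2"
  proof (rule FTC0)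
    fix x
    have "((\<lambda>t. (t - sin t * cos t)/2) has_real_derivative (1 - (cos x * cos x + sin x * (- sin x)))/2) (at x)"
      by (rule derivative_eq_intros refl)+ (simp_all add: field_simps)
    moreover have "(1 - (cos x * cos x + sin x * (- sin x)))/2 = sin x ^ 2"
      by (simp add: power2_eq_square sc)
    ultimately show "((\<lambda>t. (t - sin t * cos t)/2) has_real_derivative sin x ^ 2) (at x)" by simp
  qed (intro continuous_intros)
  finally show ?thesis by simp
qed

schematic_goal J1d: "((\<lambda>t. (t - sin t * cos t)/2 + 2 * sin t ^ 3 / 3) has_real_derivative ?D) (at (x::real))"
  by (rule derivative_eq_intros refl | simp)+

lemma J1: "J 1 = pi/2"
proof -
  have "J 1 = (LBINT t=ereal 0..ereal pi. (1 + 2 * cos t) * sin t ^ 2)" by (simp add: J_def uu_def)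
  also have "\<dots> = ((pi - sin pi * cos pi)/2 + 2 * sin pi ^ 3 / 3) - ((0 - sin 0 * cos 0)/2 + 2 * sin 0 ^ 3 / 3)"
  proof (rule FTC0)
    fix x
    show "((\<lambda>t. (t - sin t * cos t)/2 + 2 * sin t ^ 3 / 3) has_real_derivative (1 + 2 * cos x) * sin x ^ 2) (at x)"
      by (rule DERIV_cong[OF J1d]) (simp add: field_simps power2_eq_square eval_nat_numeral sc)
  qed (intro continuous_intros)
  finally show ?thesis by simp
qed

lemma alg:
  fixes c s :: real
  assumes ss: "s * s = 1 - c * c"
  shows "real (Suc k) * (1+2*c)^k * (2 * (- s)) * s^3 + (1+2*c)^(Suc k) * (3 * s^2 * c)
     = (real (k+4) * (1+2*c) ^ (k+2) - real (2*k+5) * (1+2*c) ^ (k+1) - real (3*(k+1)) * (1+2*c) ^ k) * s ^ 2 / 2"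
proof -
  have e: "(-2) * (real k + 1) * (1 - c * c) + 3 * (1 + 2 * c) * c
     = ((real k + 4) * (1 + 2 * c)^2 - (2 * real k + 5) * (1 + 2 * c) - 3 * (real k + 1)) / 2"
    by (simp add: algebra_simps power2_eq_square)
  have "real (Suc k) * (1+2*c)^k * (2 * (- s)) * s^3 + (1+2*c)^(Suc k) * (3 * s^2 * c)
      = (1+2*c)^k * (s * s) * ((-2) * (real k + 1) * (s * s) + 3 * (1 + 2 * c) * c)"
    by (simp add: algebra_simps power2_eq_square eval_nat_numeral)
  also have "\<dots> = (1+2*c)^k * (s * s) * (((real k + 4) * (1 + 2 * c)^2 - (2 * real k + 5) * (1 + 2 * c) - 3 * (real k + 1)) / 2)"
    by (simp only: e ss)
  also have "\<dots> = (real (k+4) * (1+2*c) ^ (k+2) - real (2*k+5) * (1+2*c) ^ (k+1) - real (3*(k+1)) * (1+2*c) ^ k) * s ^ 2 / 2"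
    by (simp add: algebra_simps power2_eq_square power_add)
  finally show ?thesis .
qed

schematic_goal Gd: "((\<lambda>t. (1 + 2 * cos t) ^ (Suc k) * sin t ^ 3) has_real_derivative ?D) (at (x::real))"
  by (rule derivative_eq_intros refl | simp)+

lemma Gder: "((\<lambda>t. uu t ^ (Suc k) * sin t ^ 3) has_real_derivative
   (real (k+4) * uu x ^ (k+2) - real (2*k+5) * uu x ^ (k+1) - real (3*(k+1)) * uu x ^ k) * sin x ^ 2 / 2) (at x)"
  unfolding uu_def alg[OF sc, symmetric]
  by (rule DERIV_cong[OF Gd]) (simp add: algebra_simps power2_eq_square eval_nat_numeral)

lemma Jrec: "real (k+4) * J (k+2) = real (2*k+5) * J (k+1) + real (3*(k+1)) * J k"
proof -
  define f where "f n t = uu t ^ n * sin t ^ 2" for n t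
  have I: "interval_lebesgue_integrable lborel (ereal 0) (ereal pi) (f n)" for n
    unfolding f_def by (rule intg) (rule isCont_J)
  have Jf: "J n = (LBINT t=ereal 0..ereal pi. f n t)" for n unfolding J_def f_def ..
  have "(LBINT t=ereal 0..ereal pi. (real (k+4) * uu t ^ (k+2) - real (2*k+5) * uu t ^ (k+1) - real (3*(k+1)) * uu t ^ k) * sin t ^ 2 / 2)
     = uu pi ^ (Suc k) * sin pi ^ 3 - uu 0 ^ (Suc k) * sin 0 ^ 3"
    by (rule FTC0[OF Gder]) (unfold uu_def, (intro continuous_intros | simp)+)
  also have "\<dots> = 0" by simp
  finally have 0: "(LBINT t=ereal 0..ereal pi. (real (k+4) * f (k+2) t - real (2*k+5) * f (k+1) t - real (3*(k+1)) * f k t) / 2) = 0"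
    by (simp add: f_def algebra_simps)
  have "(LBINT t=ereal 0..ereal pi. (real (k+4) * f (k+2) t - real (2*k+5) * f (k+1) t - real (3*(k+1)) * f k t) / 2)
      = (real (k+4) * J (k+2) - real (2*k+5) * J (k+1) - real (3*(k+1)) * J k) / 2"
    unfolding Jf
    by (subst interval_lebesgue_integral_divide,
        subst interval_lebesgue_integral_diff, (intro interval_lebesgue_integral_diff interval_lebesgue_integrable_mult_right I)+,
        subst interval_lebesgue_integral_diff, (intro interval_lebesgue_integrable_mult_right I)+)
       (simp add: interval_lebesgue_integral_mult_right)
  with 0 show ?thesis by simp
qed

lemma motzkin_J: "motzkin n = J n * (2/pi)"
proof (induction n rule: motzkin.induct)
  case 1 then show ?case by (simp add: J0)
next
  case 2 then show ?case using J1 by simp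
next
  case (3 k)
  have r: "J (Suc (Suc k)) = (real (2*k+5) * J (Suc k) + real (3*(k+1)) * J k) / real (k+4)"
    using Jrec[of k] by (simp add: field_simps)
  have m: "motzkin (Suc (Suc k)) = (real (2*k+5) * motzkin (Suc k) + real (3*(k+1)) * motzkin k) / real (k+4)"
    by (simp add: algebra_simps)
  have d: "pi * real k + pi * 4 \<noteq> 0" "pi * (pi * real k) + pi * (pi * 4) \<noteq> 0"
  proof -
    have "0 < pi * real k + pi * 4" "0 < pi * (pi * real k) + pi * (pi * 4)"
      using pi_gt_zero by (intro add_nonneg_pos; simp)+
    then show "pi * real k + pi * 4 \<noteq> 0" "pi * (pi * real k) + pi * (pi * 4) \<noteq> 0" by simp_all
  qed
  show ?case unfolding m r 3 by (simp add: field_simps d)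
qed

definition wt :: "real \<Rightarrow> real" where
  "wt t = indicator {0..pi} t * (2/pi) * sin t ^ 2"

definition nu0 :: "real measure" where
  "nu0 = distr (density lborel (\<lambda>t. ennreal (wt t))) borel uu"

lemma wt_meas[measurable]: "wt \<in> borel_measurable borel"
  unfolding wt_def by measurable

lemma uu_meas[measurable]: "uu \<in> borel_measurable borel"
  unfolding uu_def by measurable

lemma wt_nonneg: "0 \<le> wt t"
  unfolding wt_def by (simp add: indicator_def)

lemma mom_nu0: "mom nu0 n = J n * (2/pi)"
proof -
  have "mom nu0 n = (\<integral>t. uu t ^ n \<partial>density lborel (\<lambda>t. ennreal (wt t)))"
    unfolding mom_def nu0_def by (subst integral_distr) auto
  also have "\<dots> = (\<integral>t. wt t * uu t ^ n \<partial>lborel)"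
    by (subst integral_density) (auto simp: wt_nonneg)
  also have "\<dots> = (\<integral>t. (2/pi) * (indicator {0..pi} t *\<^sub>R (uu t ^ n * sin t ^ 2)) \<partial>lborel)"
    by (rule Bochner_Integration.integral_cong) (auto simp: wt_def)
  also have "\<dots> = (2/pi) * (LBINT t:{0..pi}. uu t ^ n * sin t ^ 2)"
    by (simp add: set_lebesgue_integral_def)
  also have "(LBINT t:{0..pi}. uu t ^ n * sin t ^ 2) = J n"
    unfolding J_def by (rule interval_integral_Icc[symmetric]) simp
  finally show ?thesis by simp
qed

lemma goodm_nu0: "goodm nu0 1 3"
proof -
  have fin: "finite_measure (density lborel (\<lambda>t. ennreal (wt t)))"
  proof (rule finite_measureI)
    have "emeasure (density lborel (\<lambda>t. ennreal (wt t))) (space (density lborel (\<lambda>t. ennreal (wt t))))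
        = (\<integral>\<^sup>+t. ennreal (wt t) * indicator UNIV t \<partial>lborel)"
      by (subst emeasure_density) auto
    also have "\<dots> \<le> (\<integral>\<^sup>+t. ennreal (2/pi) * indicator {0..pi} t \<partial>lborel)"
    proof (rule nn_integral_mono)
      fix t :: real
      have s1: "sin t ^ 2 \<le> 1" using sin_squared_eq[of t] by (simp add: zero_le_power2)
      have "wt t \<le> (2/pi) * indicator {0..pi} t"
        using pi_gt_zero s1 by (auto simp: wt_def indicator_def divide_right_mono)
      then show "ennreal (wt t) * indicator UNIV t \<le> ennreal (2/pi) * indicator {0..pi} t"
        by (cases "t \<in> {0..pi}") (auto simp: wt_def intro!: ennreal_leI)
    qed
    also have "\<dots> = ennreal (2/pi) * ennreal pi"
      by (subst nn_integral_cmult_indicator) auto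
    finally show "emeasure (density lborel (\<lambda>t. ennreal (wt t))) (space (density lborel (\<lambda>t. ennreal (wt t)))) \<noteq> \<infinity>"
      by (auto simp: top_unique ennreal_mult_eq_top_iff)
  qed
  interpret F: finite_measure nu0
    unfolding nu0_def by (rule finite_measure.finite_measure_distr[OF fin]) simp
  show ?thesis
  proof unfold_locales
    show "sets nu0 = sets borel" by (simp add: nu0_def)
    show "AE t in nu0. - 1 \<le> t \<and> t \<le> 3"
      unfolding nu0_def
    proof (subst AE_distr_iff)
      show "AE x in density lborel (\<lambda>t. ennreal (wt t)). - 1 \<le> uu x \<and> uu x \<le> 3"
      proof (rule AE_I2)
        fix x :: real
        have "-1 \<le> cos x" "cos x \<le> 1" by simp_all
        then show "- 1 \<le> uu x \<and> uu x \<le> 3" unfolding uu_def by linarith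
      qed
    qed auto
    fix c :: real assume c: "c < 3"
    define y where "y = max 0 ((c - 1)/2)"
    have y: "0 \<le> y" "y < 1" "(c-1)/2 \<le> y" using c by (auto simp: y_def)
    define d where "d = arccos y"
    have d: "0 < d" "d < pi" using arccos_lt_bounded[of y] y by (auto simp: d_def)
    have cd: "cos d = y" using y by (simp add: d_def)
    have inS: "uu t \<in> {c<..<3} \<and> wt t > 0" if t: "0 < t" "t < d" for t
    proof -
      have "cos t < cos 0" using cos_monotone_0_pi[of 0 t] t d by simp
      moreover have "cos d < cos t" using cos_monotone_0_pi[of t d] t d by simp
      moreover have "sin t > 0" using sin_gt_zero[of t] t d by simp
      ultimately show ?thesis using t d cd y by (auto simp: uu_def wt_def)
    qed
    have "emeasure nu0 {c<..<3} = emeasure (density lborel (\<lambda>t. ennreal (wt t))) (uu -` {c<..<3})"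
      unfolding nu0_def by (subst emeasure_distr) auto
    also have "\<dots> = (\<integral>\<^sup>+t. ennreal (wt t) * indicator (uu -` {c<..<3}) t \<partial>lborel)"
    proof -
      have "uu -` {c<..<3} \<inter> space borel \<in> sets borel" by (rule measurable_sets[OF uu_meas]) simp
      then show ?thesis by (subst emeasure_density) auto
    qed
    finally have eq: "emeasure nu0 {c<..<3} = (\<integral>\<^sup>+t. ennreal (wt t) * indicator (uu -` {c<..<3}) t \<partial>lborel)" .
    have "(\<integral>\<^sup>+t. ennreal (wt t) * indicator (uu -` {c<..<3}) t \<partial>lborel) \<noteq> 0"
    proof
      assume "(\<integral>\<^sup>+t. ennreal (wt t) * indicator (uu -` {c<..<3}) t \<partial>lborel) = 0"
      then have "AE t in lborel. ennreal (wt t) * indicator (uu -` {c<..<3}) t = 0"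
        by (subst (asm) nn_integral_0_iff_AE) auto
      then have "AE t in lborel. t \<notin> {0<..<d}"
        by eventually_elim (use inS in \<open>force simp: indicator_def ennreal_eq_0_iff\<close>)
      then have "{0<..<d} \<in> null_sets lborel" using AE_iff_null_sets[of "{0<..<d}" lborel] by simp
      then show False using d by (simp add: null_sets_def)
    qed
    then show "emeasure nu0 {c<..<3} > 0" using eq by (simp add: zero_less_iff_neq_zero)
  qed simp_all
qed


lemma iter: "\<exists>N P. goodm ((Lm ^^ k) nu0) N P \<and> logop_iter k motzkin = mom ((Lm ^^ k) nu0)"
proof (induction k)
  case 0
  have "motzkin = mom nu0" by (rule ext) (simp add: mom_nu0 motzkin_J)
  then show ?case using goodm_nu0 by (auto simp: logop_iter_def)
next
  case (Suc k)
  then obtain N P where g: "goodm ((Lm ^^ k) nu0) N P" and e: "logop_iter k motzkin = mom ((Lm ^^ k) nu0)" by blast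
  have "logop_iter (Suc k) motzkin = logop (logop_iter k motzkin)"
    by (simp add: logop_iter_def)
  also have "\<dots> = mom (Lm ((Lm ^^ k) nu0))"
    unfolding e by (rule ext) (rule goodm.mom_Lm[OF g, symmetric])
  finally show ?case using goodm.goodm_Lm[OF g] by auto
qed

lemma ev_iter: "eventually (\<lambda>n. logop_iter k motzkin n > 0) sequentially"
  using iter[of k] goodm.ev_pos by metis

theorem mainTheorem4:
  fixes r :: nat
  assumes "r \<ge> 1"
  shows "asymp_r_log_convex r motzkin"
proof -
  have "eventually (\<lambda>n. \<forall>k\<in>{1..r}. logop_iter k motzkin n > 0) sequentially"
    by (rule eventually_ball_finite) (auto intro: ev_iter)
  then obtain N where "\<forall>n\<ge>N. \<forall>k\<in>{1..r}. logop_iter k motzkin n > 0"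
    unfolding eventually_sequentially by blast
  then show ?thesis unfolding asymp_r_log_convex_def by (auto intro: less_imp_le)
qed

end
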